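(* Fix $m\ge1$, $\theta\in(0,1]$ and a homogeneous voting rule $f$. Suppose there is $\epsilon>0$ such that $f$ is not CM in every continuous profile $P'$ of total weight $1$ with $\max_p|w(p,P')-w(p,\hat P)|<\epsilon$. Then for every $n\ge1$, $$\rho(f,m,n,\theta)\le 2\,m!\,e^{-2\epsilon^2 n}.$$
   Context: A ranking is a strict total order on $\{1,\dots,m\}$. A discrete profile $P$ consists of candidates, $n$ voters and a ranking $P_v$ per voter; $w(p,P)$ is the number of voters with ranking $p$. A continuous profile consists of candidates, total weight $w(P)>0$ and weights $w(p,P)\ge0$ summing to $w(P)$; the normalized profile $\bar P$ has weights $w(p,P)/w(P)$. A voting rule maps every profile (discrete or continuous) to one of its candidates; homogeneous means $f(P)=f(\bar P)$. CM (discrete): $f$ is CM in discrete $P$ if there is a discrete $Q$ with the same candidates and voters, $f(Q)\ne f(P)$, and every voter $v$ with $Q_v\ne P_v$ prefers $f(Q)$ to $f(P)$ according to $P_v$. CM (continuous): $f$ is CM in continuous $P$ if there is a continuous $Q$ with the same candidates and total weight, $f(Q)\ne f(P)$, and every ranking $p$ with $w(p,Q)<w(p,P)$ prefers $f(Q)$ to $f(P)$. Perturbed Culture ($m,n\ge1$, $\theta\in(0,1]$): random discrete profile with candidates $\{1,\dots,m\}$, voters $\{1,\dots,n\}$, each voter independently having ranking $1\succ\cdots\succ m$ with probability $\theta$ and a uniformly random ranking with probability $1-\theta$. $\hat P$: total weight $1$, weight $\theta+\frac{1-\theta}{m!}$ on $1\succ\cdots\succ m$ and $\frac{1-\theta}{m!}$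 on each other ranking. $\rho(f,m,n,\theta)$: probability that $f$ is CM in the random profile. *)

theory Defs
  imports Complex_Main "HOL-Library.FuncSet"
begin

text \<open>A ranking over candidates 1..m is a list enumerating 1..m without repetition,
  most preferred first.\<close>
type_synonym ranking = "nat list"

definition rankings :: "nat \<Rightarrow> ranking set" where
  "rankings m = {p. distinct p \<and> set p = {1..m}}"

definition prefers :: "ranking \<Rightarrow> nat \<Rightarrow> nat \<Rightarrow> bool" where
  "prefers p a b \<longleftrightarrow> (\<exists>i j. i < j \<and> j < length p \<and> p ! i = a \<and> p ! j = b)"

definition disc_profiles :: "nat \<Rightarrow> nat \<Rightarrow> (nat \<Rightarrow> ranking) set" where
  "disc_profiles m n = PiE {1..n} (\<lambda>_. rankings m)"

definition dweight :: "nat \<Rightarrow> (nat \<Rightarrow> ranking) \<Rightarrow> ranking \<Rightarrow> real" where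
  "dweight n V p = real (card {v \<in> {1..n}. V v = p})"

definition total_weight :: "nat \<Rightarrow> (ranking \<Rightarrow> real) \<Rightarrow> real" where
  "total_weight m w = (\<Sum>p\<in>rankings m. w p)"

definition cont_profile :: "nat \<Rightarrow> (ranking \<Rightarrow> real) \<Rightarrow> bool" where
  "cont_profile m w \<longleftrightarrow> (\<forall>p. 0 \<le> w p) \<and> (\<forall>p. p \<notin> rankings m \<longrightarrow> w p = 0)
     \<and> total_weight m w > 0"

definition normalize :: "nat \<Rightarrow> (ranking \<Rightarrow> real) \<Rightarrow> ranking \<Rightarrow> real" where
  "normalize m w = (\<lambda>p. w p / total_weight m w)"

text \<open>A voting rule is given by its action on discrete profiles (fd m n V) and on
  continuous profiles (fc m w), always returning a candidate.\<close>
definition voting_rule ::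
  "(nat \<Rightarrow> nat \<Rightarrow> (nat \<Rightarrow> ranking) \<Rightarrow> nat) \<Rightarrow> (nat \<Rightarrow> (ranking \<Rightarrow> real) \<Rightarrow> nat) \<Rightarrow> bool" where
  "voting_rule fd fc \<longleftrightarrow>
     (\<forall>m n V. m \<ge> 1 \<longrightarrow> n \<ge> 1 \<longrightarrow> V \<in> disc_profiles m n \<longrightarrow> fd m n V \<in> {1..m}) \<and>
     (\<forall>m w. m \<ge> 1 \<longrightarrow> cont_profile m w \<longrightarrow> fc m w \<in> {1..m})"

definition homogeneous ::
  "(nat \<Rightarrow> nat \<Rightarrow> (nat \<Rightarrow> ranking) \<Rightarrow> nat) \<Rightarrow> (nat \<Rightarrow> (ranking \<Rightarrow> real) \<Rightarrow> nat) \<Rightarrow> bool" where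
  "homogeneous fd fc \<longleftrightarrow>
     (\<forall>m n V. m \<ge> 1 \<longrightarrow> n \<ge> 1 \<longrightarrow> V \<in> disc_profiles m n \<longrightarrow>
        fd m n V = fc m (\<lambda>p. dweight n V p / real n)) \<and>
     (\<forall>m w. m \<ge> 1 \<longrightarrow> cont_profile m w \<longrightarrow> fc m w = fc m (normalize m w))"

definition CM_disc ::
  "(nat \<Rightarrow> nat \<Rightarrow> (nat \<Rightarrow> ranking) \<Rightarrow> nat) \<Rightarrow> nat \<Rightarrow> nat \<Rightarrow> (nat \<Rightarrow> ranking) \<Rightarrow> bool" where
  "CM_disc fd m n P \<longleftrightarrow> (\<exists>Q \<in> disc_profiles m n. fd m n Q \<noteq> fd m n P \<and>
     (\<forall>v \<in> {1..n}. Q v \<noteq> P v \<longrightarrow> prefers (P v) (fd m n Q) (fd m n P)))"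

definition CM_cont ::
  "(nat \<Rightarrow> (ranking \<Rightarrow> real) \<Rightarrow> nat) \<Rightarrow> nat \<Rightarrow> (ranking \<Rightarrow> real) \<Rightarrow> bool" where
  "CM_cont fc m P \<longleftrightarrow> (\<exists>Q. cont_profile m Q \<and> total_weight m Q = total_weight m P \<and>
     fc m Q \<noteq> fc m P \<and>
     (\<forall>p \<in> rankings m. Q p < P p \<longrightarrow> prefers p (fc m Q) (fc m P)))"

definition id_ranking :: "nat \<Rightarrow> ranking" where
  "id_ranking m = [1..<m+1]"

text \<open>The continuous profile hat P; also the probability of a single voter's ranking
  under Perturbed Culture.\<close>
definition Phat :: "nat \<Rightarrow> real \<Rightarrow> ranking \<Rightarrow> real" where
  "Phat m \<theta> p = (if p \<in> rankings m then
      (if p = id_ranking m then \<theta> else 0) + (1 - \<theta>) / fact m else 0)"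

text \<open>rho(f,m,n,theta): probability under Perturbed Culture that f is CM.\<close>
definition rho ::
  "(nat \<Rightarrow> nat \<Rightarrow> (nat \<Rightarrow> ranking) \<Rightarrow> nat) \<Rightarrow> nat \<Rightarrow> nat \<Rightarrow> real \<Rightarrow> real" where
  "rho fd m n \<theta> = (\<Sum>V \<in> disc_profiles m n.
      if CM_disc fd m n V then (\<Prod>v\<in>{1..n}. Phat m \<theta> (V v)) else 0)"

end

theory Submission
  imports Defs "HOL-Probability.Probability" "HOL-Combinatorics.Multiset_Permutations"
begin

lemma rankings_eq: "rankings m = permutations_of_set {1..m}"
  by (auto simp: rankings_def permutations_of_set_def)

lemma finite_rankings: "finite (rankings m)"
  by (simp add: rankings_eq)

lemma card_rankings: "card (rankings m) = fact m"
  by (simp add: rankings_eq)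

lemma id_in_rankings: "id_ranking m \<in> rankings m"
  by (auto simp: rankings_def id_ranking_def)

lemma Phat_nonneg: "\<theta> \<le> 1 \<Longrightarrow> 0 \<le> \<theta> \<Longrightarrow> 0 \<le> Phat m \<theta> p"
  by (auto simp: Phat_def)

lemma Phat_le1: "\<theta> \<le> 1 \<Longrightarrow> 0 \<le> \<theta> \<Longrightarrow> Phat m \<theta> p \<le> 1"
proof -
  assume a: "\<theta> \<le> 1" "0 \<le> \<theta>"
  have f: "(1::real) \<le> fact m" by simp
  have "(1 - \<theta>) / fact m \<le> 1 - \<theta>"
    using a f mult_right_mono[OF f, of "1 - \<theta>"] by (simp add: divide_le_eq mult.commute)
  moreover have "1 - \<theta> \<le> fact m" using a f by linarith
  then have "(1 - \<theta>) / fact m \<le> 1" by (simp add: divide_le_eq)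
  ultimately show ?thesis using a by (auto simp: Phat_def)
qed

lemma Phat_sum: "sum (Phat m \<theta>) (rankings m) = 1"
proof -
  have "sum (Phat m \<theta>) (rankings m) =
     (\<Sum>p\<in>rankings m. (if p = id_ranking m then \<theta> else 0)) + (\<Sum>p\<in>rankings m. (1 - \<theta>) / fact m)"
    by (simp add: Phat_def sum.distrib)
  also have "\<dots> = \<theta> + 1 - \<theta>"
    using id_in_rankings[of m] finite_rankings[of m] by (simp add: card_rankings)
  finally show ?thesis by simp
qed

lemma dweight_sum:
  assumes "V \<in> disc_profiles m n"
  shows "(\<Sum>p\<in>rankings m. dweight n V p) = real n"
proof -
  have "(\<Sum>p\<in>rankings m. dweight n V p) = (\<Sum>p\<in>rankings m. \<Sum>v\<in>{1..n}. if V v = p then 1 else 0)"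
    unfolding dweight_def by (intro sum.cong refl) (auto simp: sum.If_cases intro!: arg_cong[where f=card])
  also have "\<dots> = (\<Sum>v\<in>{1..n}. \<Sum>p\<in>rankings m. if V v = p then 1 else 0)"
    by (rule sum.swap)
  also have "\<dots> = (\<Sum>v\<in>{1..n}. 1)"
    using assms finite_rankings[of m]
    by (intro sum.cong refl) (auto simp: disc_profiles_def PiE_def Pi_def)
  finally show ?thesis by simp
qed

lemma dweight_outside:
  assumes "V \<in> disc_profiles m n" "p \<notin> rankings m"
  shows "dweight n V p = 0"
  using assms by (auto simp: dweight_def disc_profiles_def PiE_def Pi_def)

lemma disc_cont_profile:
  assumes "V \<in> disc_profiles m n" "n \<ge> 1"
  shows "cont_profile m (\<lambda>p. dweight n V p / real n)"
    and "total_weight m (\<lambda>p. dweight n V p / real n) = 1"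
proof -
  have tw: "total_weight m (\<lambda>p. dweight n V p / real n) = 1"
    using dweight_sum[OF assms(1)] assms(2)
    by (simp add: total_weight_def sum_divide_distrib[symmetric])
  then show "total_weight m (\<lambda>p. dweight n V p / real n) = 1" .
  show "cont_profile m (\<lambda>p. dweight n V p / real n)"
    unfolding cont_profile_def using tw dweight_outside[OF assms(1)]
    by (auto simp: dweight_def)
qed

lemma CM_disc_to_cont:
  assumes "voting_rule fd fc" "homogeneous fd fc" "m \<ge> 1" "n \<ge> 1"
    and V: "V \<in> disc_profiles m n" and cm: "CM_disc fd m n V"
  shows "CM_cont fc m (\<lambda>p. dweight n V p / real n)"
proof -
  from cm obtain Q where Q: "Q \<in> disc_profiles m n" "fd m n Q \<noteq> fd m n V"
    "\<forall>v\<in>{1..n}. Q v \<noteq> V v \<longrightarrow> prefers (V v) (fd m n Q) (fd m n V)"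
    unfolding CM_disc_def by blast
  have hQ: "fc m (\<lambda>p. dweight n Q p / real n) = fd m n Q"
    using assms(2-4) Q(1) by (simp add: homogeneous_def)
  have hV: "fc m (\<lambda>p. dweight n V p / real n) = fd m n V"
    using assms(2-4) V by (simp add: homogeneous_def)
  show ?thesis
    unfolding CM_cont_def
  proof (intro exI[of _ "\<lambda>p. dweight n Q p / real n"] conjI ballI impI)
    show "cont_profile m (\<lambda>p. dweight n Q p / real n)" using disc_cont_profile[OF Q(1) assms(4)] by blast
    show "total_weight m (\<lambda>p. dweight n Q p / real n) = total_weight m (\<lambda>p. dweight n V p / real n)"
      using disc_cont_profile[OF Q(1) assms(4)] disc_cont_profile[OF V assms(4)] by simp
    show "fc m (\<lambda>p. dweight n Q p / real n) \<noteq> fc m (\<lambda>p. dweight n V p / real n)"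
      using hQ hV Q(2) by simp
    fix p assume "p \<in> rankings m" and lt: "dweight n Q p / real n < dweight n V p / real n"
    have "card {v \<in> {1..n}. Q v = p} < card {v \<in> {1..n}. V v = p}"
      using lt assms(4) by (simp add: dweight_def divide_strict_right_mono_neg divide_less_cancel)
    moreover have fin: "finite {v \<in> {1..n}. Q v = p}" by simp
    ultimately have "\<not> {v \<in> {1..n}. V v = p} \<subseteq> {v \<in> {1..n}. Q v = p}"
      using card_mono[OF fin] by (meson not_le)
    then obtain v where v: "v \<in> {1..n}" "V v = p" "Q v \<noteq> p" by blast
    then show "prefers p (fc m (\<lambda>p. dweight n Q p / real n)) (fc m (\<lambda>p. dweight n V p / real n))"
      using Q(3) hQ hV by metis
  qed
qed

context
  fixes m :: nat and \<theta> :: real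
  assumes th0: "0 \<le> \<theta>" and th1: "\<theta> \<le> 1"
begin

definition D :: "ranking pmf" where "D = embed_pmf (Phat m \<theta>)"

lemma pmf_D: "pmf D p = Phat m \<theta> p"
proof -
  have "(\<integral>\<^sup>+x. ennreal (Phat m \<theta> x) \<partial>count_space UNIV)
        = (\<integral>\<^sup>+x. ennreal (Phat m \<theta> x) * indicator (rankings m) x \<partial>count_space UNIV)"
    by (intro nn_integral_cong) (auto simp: Phat_def indicator_def)
  also have "\<dots> = (\<integral>\<^sup>+x. ennreal (Phat m \<theta> x) \<partial>count_space (rankings m))"
    by (simp add: nn_integral_count_space_indicator)
  also have "\<dots> = (\<Sum>x\<in>rankings m. ennreal (Phat m \<theta> x))"
    by (simp add: nn_integral_count_space_finite finite_rankings)
  also have "\<dots> = ennreal (\<Sum>x\<in>rankings m. Phat m \<theta> x)"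
    using Phat_nonneg[OF th1 th0] by (simp add: sum_ennreal)
  also have "\<dots> = 1" by (simp add: Phat_sum)
  finally show ?thesis unfolding D_def
    by (intro pmf_embed_pmf) (auto simp: Phat_nonneg[OF th1 th0])
qed

lemma bern_D: "map_pmf (\<lambda>x. x = r) D = bernoulli_pmf (Phat m \<theta> r)"
proof (rule pmf_eqI)
  fix b :: bool
  have "pmf (map_pmf (\<lambda>x. x = r) D) b = measure_pmf.prob D ((\<lambda>x. x = r) -` {b})"
    by (simp add: pmf_map)
  also have "\<dots> = (if b then Phat m \<theta> r else 1 - Phat m \<theta> r)"
  proof (cases b)
    case True
    then have "(\<lambda>x. x = r) -` {b} = {r}" by auto
    then show ?thesis using True by (simp add: measure_pmf_single pmf_D)
  next
    case False
    then have "(\<lambda>x. x = r) -` {b} = UNIV - {r}" by auto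
    then show ?thesis using False measure_pmf.prob_compl[of "{r}" D]
      by (simp add: measure_pmf_single pmf_D)
  qed
  finally show "pmf (map_pmf (\<lambda>x. x = r) D) b = pmf (bernoulli_pmf (Phat m \<theta> r)) b"
    using Phat_nonneg[OF th1 th0] Phat_le1[OF th1 th0] by simp
qed

definition PP :: "nat \<Rightarrow> (nat \<Rightarrow> ranking) pmf" where
  "PP n = Pi_pmf {1..n} undefined (\<lambda>_. D)"

lemma pmf_PP: "V \<in> disc_profiles m n \<Longrightarrow> pmf (PP n) V = (\<Prod>v\<in>{1..n}. Phat m \<theta> (V v))"
  unfolding PP_def by (subst pmf_Pi') (auto simp: disc_profiles_def PiE_def extensional_def pmf_D)

lemma tail_bound:
  assumes "n \<ge> 1" "\<epsilon> \<ge> 0"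
  shows "measure_pmf.prob (PP n) {V. \<epsilon> \<le> \<bar>dweight n V r / real n - Phat m \<theta> r\<bar>}
           \<le> 2 * exp (- 2 * \<epsilon>^2 * real n)"
proof -
  let ?q = "Phat m \<theta> r"
  have q: "?q \<in> {0..1}" using Phat_nonneg[OF th1 th0] Phat_le1[OF th1 th0] by auto
  have "binomial_pmf n ?q = map_pmf (\<lambda>f. card {x\<in>{1..n}. f x})
           (Pi_pmf {1..n} (undefined = r) (\<lambda>_. bernoulli_pmf ?q))"
    by (rule binomial_pmf_altdef') (use q in auto)
  also have "Pi_pmf {1..n} (undefined = r) (\<lambda>_. bernoulli_pmf ?q) =
             Pi_pmf {1..n} (undefined = r) (\<lambda>_. map_pmf (\<lambda>x. x = r) D)"
    by (simp add: bern_D)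
  also have "\<dots> = map_pmf ((\<circ>) (\<lambda>x. x = r)) (PP n)"
    unfolding PP_def by (rule Pi_pmf_map) auto
  finally have eq: "binomial_pmf n ?q = map_pmf (\<lambda>h. card {x\<in>{1..n}. h x = r}) (PP n)"
    by (simp add: pmf.map_comp o_def)
  have "measure_pmf.prob (PP n) {V. \<epsilon> \<le> \<bar>dweight n V r / real n - ?q\<bar>}
        = measure_pmf.prob (binomial_pmf n ?q) {x. \<epsilon> \<le> \<bar>real x / real n - ?q\<bar>}"
    unfolding eq measure_map_pmf by (simp add: dweight_def vimage_def)
  also have "\<dots> \<le> 2 * exp (real_of_int (- 2 * int n) * \<epsilon>\<^sup>2)"
    by (rule binomial_distribution.prob_abs_ge') (use q assms in \<open>auto simp: binomial_distribution_def\<close>)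
  also have "\<dots> = 2 * exp (- 2 * \<epsilon>^2 * real n)" by (simp add: mult.commute mult.left_commute)
  finally show ?thesis .
qed

end

theorem mainTheorem13:
  fixes fd :: "nat \<Rightarrow> nat \<Rightarrow> (nat \<Rightarrow> ranking) \<Rightarrow> nat"
    and fc :: "nat \<Rightarrow> (ranking \<Rightarrow> real) \<Rightarrow> nat"
    and m :: nat and \<theta> :: real and \<epsilon> :: real
  assumes "m \<ge> 1" and "0 < \<theta>" and "\<theta> \<le> 1"
    and "voting_rule fd fc" and "homogeneous fd fc"
    and "\<epsilon> > 0"
    and "\<forall>P'. cont_profile m P' \<and> total_weight m P' = 1 \<and>
              (\<forall>p \<in> rankings m. \<bar>P' p - Phat m \<theta> p\<bar> < \<epsilon>) \<longrightarrow> \<not> CM_cont fc m P'"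
  shows "\<forall>n \<ge> 1. rho fd m n \<theta> \<le> 2 * fact m * exp (- 2 * \<epsilon>^2 * real n)"
proof (intro allI impI)
  fix n :: nat assume n: "n \<ge> 1"
  have th0: "0 \<le> \<theta>" using assms(2) by simp
  let ?P = "PP m \<theta> n"
  let ?E = "\<lambda>r. {V. \<epsilon> \<le> \<bar>dweight n V r / real n - Phat m \<theta> r\<bar>}"
  have fin: "finite (disc_profiles m n)"
    by (simp add: disc_profiles_def finite_PiE finite_rankings)
  have "rho fd m n \<theta> = (\<Sum>V\<in>{V\<in>disc_profiles m n. CM_disc fd m n V}. \<Prod>v\<in>{1..n}. Phat m \<theta> (V v))"
    unfolding rho_def by (rule sum.inter_filter[symmetric, OF fin])
  also have "\<dots> = (\<Sum>V\<in>{V\<in>disc_profiles m n. CM_disc fd m n V}. pmf ?P V)"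
    by (intro sum.cong refl) (simp add: pmf_PP[OF th0 assms(3)])
  also have "\<dots> = measure_pmf.prob ?P {V\<in>disc_profiles m n. CM_disc fd m n V}"
    by (simp add: measure_measure_pmf_finite fin)
  also have "\<dots> \<le> measure_pmf.prob ?P (\<Union>r\<in>rankings m. ?E r)"
  proof (rule measure_pmf.finite_measure_mono)
    show "{V \<in> disc_profiles m n. CM_disc fd m n V} \<subseteq> (\<Union>r\<in>rankings m. ?E r)"
    proof safe
      fix V assume V: "V \<in> disc_profiles m n" and cm: "CM_disc fd m n V"
      have "CM_cont fc m (\<lambda>p. dweight n V p / real n)"
        by (rule CM_disc_to_cont[OF assms(4,5,1) n V cm])
      then have "\<not> (\<forall>p \<in> rankings m. \<bar>dweight n V p / real n - Phat m \<theta> p\<bar> < \<epsilon>)"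
        using assms(7) disc_cont_profile[OF V n] by blast
      then show "V \<in> (\<Union>r\<in>rankings m. ?E r)" by (auto simp: not_less)
    qed
  qed simp
  also have "\<dots> \<le> (\<Sum>r\<in>rankings m. measure_pmf.prob ?P (?E r))"
    by (rule measure_pmf.finite_measure_subadditive_finite) (auto simp: finite_rankings)
  also have "\<dots> \<le> (\<Sum>r\<in>rankings m. 2 * exp (- 2 * \<epsilon>^2 * real n))"
    by (intro sum_mono tail_bound[OF th0 assms(3) n]) (use assms(6) in simp)
  also have "\<dots> = 2 * fact m * exp (- 2 * \<epsilon>^2 * real n)"
    by (simp add: card_rankings)
  finally show "rho fd m n \<theta> \<le> 2 * fact m * exp (- 2 * \<epsilon>^2 * real n)" .
qed

end
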